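(* Let $G$ and $H$ be connected graphs, each of order at least $2$. Then $dim_s(G\square H)=2$ if and only if both $G$ and $H$ are paths.
   Context: Graphs are finite, simple, undirected; for connected $G$, $d_G$ is the shortest-path distance and $I_G[u,v]$ is the set of vertices lying on some shortest $u$–$v$ path. A vertex $w$ strongly resolves vertices $u,v$ if $v\in I_G[u,w]$ or $u\in I_G[v,w]$. A strong resolving set of $G$ is a set $S\subseteq V(G)$ such that every pair of vertices is strongly resolved by some vertex of $S$; $dim_s(G)$ is the minimum cardinality of such a set. $G\square H$ denotes the Cartesian product: vertex set $V(G)\times V(H)$, $(a,b)\sim(c,d)$ iff ($a=c$ and $bd\in E(H)$) or ($b=d$ and $ac\in E(G)$). *)

theory Defs
  imports Main
begin

definition graph :: "'a set \<Rightarrow> ('a \<Rightarrow> 'a \<Rightarrow> bool) \<Rightarrow> bool" where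
  "graph V E \<longleftrightarrow> finite V \<and>
     (\<forall>u v. E u v \<longrightarrow> u \<in> V \<and> v \<in> V \<and> u \<noteq> v \<and> E v u)"

definition walk :: "'a set \<Rightarrow> ('a \<Rightarrow> 'a \<Rightarrow> bool) \<Rightarrow> 'a list \<Rightarrow> bool" where
  "walk V E xs \<longleftrightarrow> xs \<noteq> [] \<and> set xs \<subseteq> V \<and>
     (\<forall>i. Suc i < length xs \<longrightarrow> E (xs ! i) (xs ! Suc i))"

definition connected_graph :: "'a set \<Rightarrow> ('a \<Rightarrow> 'a \<Rightarrow> bool) \<Rightarrow> bool" where
  "connected_graph V E \<longleftrightarrow> V \<noteq> {} \<and>
     (\<forall>u\<in>V. \<forall>v\<in>V. \<exists>xs. walk V E xs \<and> hd xs = u \<and> last xs = v)"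

definition gdist :: "'a set \<Rightarrow> ('a \<Rightarrow> 'a \<Rightarrow> bool) \<Rightarrow> 'a \<Rightarrow> 'a \<Rightarrow> nat" where
  "gdist V E u v = (LEAST n. \<exists>xs. walk V E xs \<and> hd xs = u \<and> last xs = v \<and> length xs = Suc n)"

definition interval :: "'a set \<Rightarrow> ('a \<Rightarrow> 'a \<Rightarrow> bool) \<Rightarrow> 'a \<Rightarrow> 'a \<Rightarrow> 'a set" where
  "interval V E u v = {w. \<exists>xs. walk V E xs \<and> hd xs = u \<and> last xs = v \<and>
       length xs = Suc (gdist V E u v) \<and> w \<in> set xs}"

definition strongly_resolves :: "'a set \<Rightarrow> ('a \<Rightarrow> 'a \<Rightarrow> bool) \<Rightarrow> 'a \<Rightarrow> 'a \<Rightarrow> 'a \<Rightarrow> bool" where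
  "strongly_resolves V E w u v \<longleftrightarrow> v \<in> interval V E u w \<or> u \<in> interval V E v w"

definition strong_resolving_set :: "'a set \<Rightarrow> ('a \<Rightarrow> 'a \<Rightarrow> bool) \<Rightarrow> 'a set \<Rightarrow> bool" where
  "strong_resolving_set V E S \<longleftrightarrow> S \<subseteq> V \<and>
     (\<forall>u\<in>V. \<forall>v\<in>V. \<exists>w\<in>S. strongly_resolves V E w u v)"

definition strong_metric_dim :: "'a set \<Rightarrow> ('a \<Rightarrow> 'a \<Rightarrow> bool) \<Rightarrow> nat" where
  "strong_metric_dim V E = (LEAST k. \<exists>S. strong_resolving_set V E S \<and> card S = k)"

definition cart_adj :: "('a \<Rightarrow> 'a \<Rightarrow> bool) \<Rightarrow> ('b \<Rightarrow> 'b \<Rightarrow> bool) \<Rightarrow> ('a \<times> 'b) \<Rightarrow> ('a \<times> 'b) \<Rightarrow> bool" where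
  "cart_adj E F p q \<longleftrightarrow> (fst p = fst q \<and> F (snd p) (snd q)) \<or> (snd p = snd q \<and> E (fst p) (fst q))"

definition is_path_graph :: "'a set \<Rightarrow> ('a \<Rightarrow> 'a \<Rightarrow> bool) \<Rightarrow> bool" where
  "is_path_graph V E \<longleftrightarrow> (\<exists>xs. distinct xs \<and> set xs = V \<and>
     (\<forall>u v. E u v \<longleftrightarrow> (\<exists>i. Suc i < length xs \<and> {u, v} = {xs ! i, xs ! Suc i})))"

end

theory Submission
  imports Defs
begin

lemma walk_Nil[simp]: "\<not> walk V E []" by (simp add: walk_def)
lemma walk_single[simp]: "walk V E [x] \<longleftrightarrow> x \<in> V" by (simp add: walk_def)

lemma walk_Cons2: "walk V E (x # y # xs) \<longleftrightarrow> x \<in> V \<and> E x y \<and> walk V E (y # xs)"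
proof
  assume w: "walk V E (x # y # xs)"
  from w have A: "\<forall>i. Suc i < length (x#y#xs) \<longrightarrow> E ((x#y#xs)!i) ((x#y#xs)! Suc i)"
    by (simp add: walk_def)
  from A[rule_format, of 0] have "E x y" by simp
  moreover have "\<forall>i. Suc i < length (y#xs) \<longrightarrow> E ((y#xs)!i) ((y#xs)! Suc i)"
  proof (intro allI impI)
    fix i assume "Suc i < length (y#xs)"
    then show "E ((y#xs)!i) ((y#xs)! Suc i)" using A[rule_format, of "Suc i"] by simp
  qed
  ultimately show "x \<in> V \<and> E x y \<and> walk V E (y # xs)" using w by (auto simp: walk_def)
next
  assume a: "x \<in> V \<and> E x y \<and> walk V E (y # xs)"
  show "walk V E (x # y # xs)" unfolding walk_def
  proof (intro conjI allI impI)
    show "set (x # y # xs) \<subseteq> V" using a by (auto simp: walk_def)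
    fix i assume i: "Suc i < length (x # y # xs)"
    show "E ((x # y # xs) ! i) ((x # y # xs) ! Suc i)"
    proof (cases i)
      case 0 then show ?thesis using a by simp
    next
      case (Suc j) then show ?thesis using a i by (auto simp: walk_def)
    qed
  qed simp
qed

lemma walk_in: "walk V E xs \<Longrightarrow> x \<in> set xs \<Longrightarrow> x \<in> V" by (auto simp: walk_def)

lemma walk_append: "walk V E p \<Longrightarrow> walk V E q \<Longrightarrow> last p = hd q \<Longrightarrow> walk V E (p @ tl q)"
proof (induction p)
  case Nil then show ?case by simp
next
  case (Cons x p')
  show ?case
  proof (cases p')
    case Nil
    then show ?thesis using Cons.prems by (cases q) auto
  next
    case (Cons y r)
    have "walk V E (y # r @ tl q)" using Cons.IH Cons.prems \<open>p' = y # r\<close>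
      by (auto simp: walk_Cons2)
    then show ?thesis using Cons.prems \<open>p' = y # r\<close> by (simp add: walk_Cons2)
  qed
qed

lemma append_tl_props:
  assumes "p \<noteq> []" "q \<noteq> []" "last p = hd q"
  shows "hd (p @ tl q) = hd p" "last (p @ tl q) = last q"
    "length (p @ tl q) = length p + length q - 1" "set p \<subseteq> set (p @ tl q)"
  using assms by (cases q; auto)+

lemma walk_take: "walk V E xs \<Longrightarrow> 0 < n \<Longrightarrow> walk V E (take n xs)"
  unfolding walk_def by (auto dest: in_set_takeD)

lemma walk_drop: "walk V E xs \<Longrightarrow> n < length xs \<Longrightarrow> walk V E (drop n xs)"
  unfolding walk_def by (auto dest: in_set_dropD)

lemma walk_map:
  assumes "walk V E xs" "\<And>x. x \<in> V \<Longrightarrow> f x \<in> V'" "\<And>x y. E x y \<Longrightarrow> E' (f x) (f y)"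
  shows "walk V' E' (map f xs)"
  using assms unfolding walk_def by auto

lemma gdist_le: "walk V E xs \<Longrightarrow> hd xs = u \<Longrightarrow> last xs = v \<Longrightarrow> gdist V E u v \<le> length xs - 1"
  unfolding gdist_def
  apply (rule Least_le)
  apply (rule exI[of _ xs])
  by (cases xs) auto

lemma gdist_walk:
  assumes "connected_graph V E" "u \<in> V" "v \<in> V"
  shows "\<exists>xs. walk V E xs \<and> hd xs = u \<and> last xs = v \<and> length xs = Suc (gdist V E u v)"
proof -
  obtain xs where xs: "walk V E xs" "hd xs = u" "last xs = v"
    using assms unfolding connected_graph_def by blast
  then have "\<exists>n. \<exists>xs. walk V E xs \<and> hd xs = u \<and> last xs = v \<and> length xs = Suc n"
    by (intro exI[of _ "length xs - 1"] exI[of _ xs]) (cases xs, auto)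
  then show ?thesis unfolding gdist_def by (rule LeastI_ex)
qed

lemma gdist_refl: "u \<in> V \<Longrightarrow> gdist V E u u = 0"
  using gdist_le[of V E "[u]" u u] by simp

lemma gdist_eq0:
  assumes "connected_graph V E" "u \<in> V" "v \<in> V" "gdist V E u v = 0"
  shows "u = v"
proof -
  obtain xs where "walk V E xs" "hd xs = u" "last xs = v" "length xs = 1"
    using gdist_walk[OF assms(1-3)] assms(4) by auto
  then show ?thesis by (cases xs) auto
qed

lemma gdist_edge: "E u v \<Longrightarrow> u \<in> V \<Longrightarrow> v \<in> V \<Longrightarrow> gdist V E u v \<le> 1"
  using gdist_le[of V E "[u,v]" u v] by (simp add: walk_Cons2)

lemma gdist_tri:
  assumes "connected_graph V E" "u \<in> V" "x \<in> V" "w \<in> V"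
  shows "gdist V E u w \<le> gdist V E u x + gdist V E x w"
proof -
  obtain p where p: "walk V E p" "hd p = u" "last p = x" "length p = Suc (gdist V E u x)"
    using gdist_walk[OF assms(1,2,3)] by auto
  obtain q where q: "walk V E q" "hd q = x" "last q = w" "length q = Suc (gdist V E x w)"
    using gdist_walk[OF assms(1,3,4)] by auto
  have ne: "p \<noteq> []" "q \<noteq> []" using p q by auto
  have "walk V E (p @ tl q)" using walk_append[OF p(1) q(1)] p q by auto
  moreover note append_tl_props[OF ne] 
  ultimately show ?thesis using gdist_le[of V E "p @ tl q" u w] p q by auto
qed

lemma interval_iff:
  assumes c: "connected_graph V E" and uw: "u \<in> V" "w \<in> V"
  shows "x \<in> interval V E u w \<longleftrightarrow> x \<in> V \<and> gdist V E u x + gdist V E x w = gdist V E u w"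
proof
  assume "x \<in> interval V E u w"
  then obtain xs where xs: "walk V E xs" "hd xs = u" "last xs = w"
      "length xs = Suc (gdist V E u w)" "x \<in> set xs"
    unfolding interval_def by blast
  obtain k where k: "k < length xs" "xs ! k = x" using xs(5) by (auto simp: in_set_conv_nth)
  have xV: "x \<in> V" using walk_in[OF xs(1) xs(5)] .
  have ne: "xs \<noteq> []" using xs by auto
  have "gdist V E u x \<le> length (take (Suc k) xs) - 1"
  proof (rule gdist_le)
    show "walk V E (take (Suc k) xs)" using walk_take[OF xs(1)] by simp
    show "hd (take (Suc k) xs) = u" using xs ne by (simp add: hd_take)
    show "last (take (Suc k) xs) = x" using k by (simp add: take_Suc_conv_app_nth)
  qed
  moreover have "gdist V E x w \<le> length (drop k xs) - 1"
  proof (rule gdist_le)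
    show "walk V E (drop k xs)" using walk_drop[OF xs(1) k(1)] .
    show "hd (drop k xs) = x" using k by (simp add: hd_drop_conv_nth)
    show "last (drop k xs) = w" using k xs by simp
  qed
  ultimately have "gdist V E u x + gdist V E x w \<le> gdist V E u w" using k xs(4) by simp
  moreover have "gdist V E u w \<le> gdist V E u x + gdist V E x w" using gdist_tri[OF c uw(1) xV uw(2)] .
  ultimately show "x \<in> V \<and> gdist V E u x + gdist V E x w = gdist V E u w" using xV by auto
next
  assume a: "x \<in> V \<and> gdist V E u x + gdist V E x w = gdist V E u w"
  have xV: "x \<in> V" using a by simp
  obtain p where p: "walk V E p" "hd p = u" "last p = x" "length p = Suc (gdist V E u x)"
    using gdist_walk[OF c uw(1) xV] by blast
  obtain q where q: "walk V E q" "hd q = x" "last q = w" "length q = Suc (gdist V E x w)"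
    using gdist_walk[OF c xV uw(2)] by blast
  have ne: "p \<noteq> []" "q \<noteq> []" using p q by auto
  have lp: "last p = hd q" using p q by simp
  have W: "walk V E (p @ tl q)" using walk_append[OF p(1) q(1) lp] .
  note P = append_tl_props[OF ne lp]
  have "x \<in> set p" using p ne by auto
  then have X: "x \<in> set (p @ tl q)" using P(4) by blast
  have L: "length (p @ tl q) = Suc (gdist V E u w)" using P(3) p q a by simp
  show "x \<in> interval V E u w" unfolding interval_def
    using W X L P(1,2) p(2) q(3) by blast
qed

lemma walk_lip:
  assumes "walk V E xs" "\<And>x y. x \<in> V \<Longrightarrow> y \<in> V \<Longrightarrow> E x y \<Longrightarrow> f x \<le> f y + 1"
  shows "f (hd xs) \<le> f (last xs) + (length xs - 1)"
  using assms(1)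
proof (induction xs)
  case Nil then show ?case by simp
next
  case (Cons x xs')
  show ?case
  proof (cases xs')
    case Nil then show ?thesis by simp
  next
    case (Cons y r)
    have h: "x \<in> V" "E x y" "walk V E (y # r)" using Cons.prems \<open>xs' = y # r\<close> by (auto simp: walk_Cons2)
    have yV: "y \<in> V" using walk_in[OF h(3)] by simp
    have "f y \<le> f (last (y # r)) + length r" using Cons.IH h(3) \<open>xs' = y # r\<close> by simp
    moreover have "f x \<le> f y + 1" using assms(2)[OF h(1) yV h(2)] .
    ultimately show ?thesis using \<open>xs' = y # r\<close> by simp
  qed
qed

lemma prod_walk:
  assumes p: "walk V E p" "hd p = g1" "last p = g2"
    and q: "walk W F q" "hd q = h1" "last q = h2"
  shows "\<exists>zs. walk (V \<times> W) (cart_adj E F) zs \<and> hd zs = (g1, h1) \<and> last zs = (g2, h2)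
           \<and> length zs = length p + length q - 1"
proof -
  have ne: "p \<noteq> []" "q \<noteq> []" using p q by auto
  have h1W: "h1 \<in> W" using walk_in[OF q(1)] q(2) ne by auto
  have g2V: "g2 \<in> V" using walk_in[OF p(1)] p(3) ne by auto
  define p' where "p' = map (\<lambda>x. (x, h1)) p"
  define q' where "q' = map (\<lambda>y. (g2, y)) q"
  have wp: "walk (V \<times> W) (cart_adj E F) p'" unfolding p'_def
    by (rule walk_map[OF p(1)]) (auto simp: h1W cart_adj_def)
  have wq: "walk (V \<times> W) (cart_adj E F) q'" unfolding q'_def
    by (rule walk_map[OF q(1)]) (auto simp: g2V cart_adj_def)
  have ne': "p' \<noteq> []" "q' \<noteq> []" using ne by (auto simp: p'_def q'_def)
  have lp: "last p' = hd q'" using ne p q by (simp add: p'_def q'_def last_map hd_map)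
  note P = append_tl_props[OF ne' lp]
  show ?thesis
    apply (rule exI[of _ "p' @ tl q'"])
    using walk_append[OF wp wq lp] P ne p q
    by (simp add: p'_def q'_def last_map hd_map)
qed

lemma cart_conn:
  assumes "connected_graph V E" "connected_graph W F"
  shows "connected_graph (V \<times> W) (cart_adj E F)"
  unfolding connected_graph_def
proof (intro conjI ballI)
  show "V \<times> W \<noteq> {}" using assms unfolding connected_graph_def by auto
  fix u v assume "u \<in> V \<times> W" "v \<in> V \<times> W"
  then obtain g1 h1 g2 h2 where uv: "u = (g1, h1)" "v = (g2, h2)" "g1 \<in> V" "g2 \<in> V" "h1 \<in> W" "h2 \<in> W"
    by auto
  obtain p where "walk V E p" "hd p = g1" "last p = g2" using assms(1) uv unfolding connected_graph_def by blast
  moreover obtain q where "walk W F q" "hd q = h1" "last q = h2" using assms(2) uv unfolding connected_graph_def by blast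
  ultimately show "\<exists>xs. walk (V \<times> W) (cart_adj E F) xs \<and> hd xs = u \<and> last xs = v"
    using prod_walk uv by metis
qed

lemma prod_dist:
  assumes cG: "connected_graph V E" and cH: "connected_graph W F"
    and mem: "g1 \<in> V" "g2 \<in> V" "h1 \<in> W" "h2 \<in> W"
  shows "gdist (V \<times> W) (cart_adj E F) (g1, h1) (g2, h2) = gdist V E g1 g2 + gdist W F h1 h2"
proof (rule antisym)
  obtain p where p: "walk V E p" "hd p = g1" "last p = g2" "length p = Suc (gdist V E g1 g2)"
    using gdist_walk[OF cG mem(1,2)] by blast
  obtain q where q: "walk W F q" "hd q = h1" "last q = h2" "length q = Suc (gdist W F h1 h2)"
    using gdist_walk[OF cH mem(3,4)] by blast
  obtain zs where zs: "walk (V \<times> W) (cart_adj E F) zs" "hd zs = (g1, h1)" "last zs = (g2, h2)"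
      "length zs = length p + length q - 1"
    using prod_walk[OF p(1-3) q(1-3)] by blast
  show "gdist (V \<times> W) (cart_adj E F) (g1, h1) (g2, h2) \<le> gdist V E g1 g2 + gdist W F h1 h2"
    using gdist_le[OF zs(1-3)] zs(4) p(4) q(4) by simp
next
  have cP: "connected_graph (V \<times> W) (cart_adj E F)" using cart_conn[OF cG cH] .
  obtain zs where zs: "walk (V \<times> W) (cart_adj E F) zs" "hd zs = (g1, h1)" "last zs = (g2, h2)"
      "length zs = Suc (gdist (V \<times> W) (cart_adj E F) (g1, h1) (g2, h2))"
    using gdist_walk[OF cP] mem by blast
  define f where "f z = gdist V E (fst z) g2 + gdist W F (snd z) h2" for z
  have "f (hd zs) \<le> f (last zs) + (length zs - 1)"
  proof (rule walk_lip[OF zs(1)])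
    fix x y assume xy: "x \<in> V \<times> W" "y \<in> V \<times> W" "cart_adj E F x y"
    show "f x \<le> f y + 1"
    proof (cases "fst x = fst y \<and> F (snd x) (snd y)")
      case True
      have "gdist W F (snd x) h2 \<le> gdist W F (snd x) (snd y) + gdist W F (snd y) h2"
        using gdist_tri[OF cH] xy mem by auto
      moreover have "gdist W F (snd x) (snd y) \<le> 1" using gdist_edge True xy by (metis mem_Times_iff)
      ultimately show ?thesis using True by (simp add: f_def)
    next
      case False
      then have T: "snd x = snd y" "E (fst x) (fst y)" using xy(3) by (auto simp: cart_adj_def)
      have "gdist V E (fst x) g2 \<le> gdist V E (fst x) (fst y) + gdist V E (fst y) g2"
        using gdist_tri[OF cG] xy mem by auto
      moreover have "gdist V E (fst x) (fst y) \<le> 1" using gdist_edge T xy by (metis mem_Times_iff)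
      ultimately show ?thesis using T by (simp add: f_def)
    qed
  qed
  then show "gdist V E g1 g2 + gdist W F h1 h2 \<le> gdist (V \<times> W) (cart_adj E F) (g1, h1) (g2, h2)"
    using zs mem by (simp add: f_def gdist_refl)
qed

definition resf :: "('a \<Rightarrow> 'a \<Rightarrow> nat) \<Rightarrow> ('b \<Rightarrow> 'b \<Rightarrow> nat) \<Rightarrow> 'a \<Rightarrow> 'b \<Rightarrow> 'a \<Rightarrow> 'b \<Rightarrow> 'a \<Rightarrow> 'b \<Rightarrow> bool" where
  "resf dG dH a b g1 h1 g2 h2 \<longleftrightarrow>
    (dG g1 g2 + dG g2 a = dG g1 a \<and> dH h1 h2 + dH h2 b = dH h1 b) \<or>
    (dG g2 g1 + dG g1 a = dG g2 a \<and> dH h2 h1 + dH h1 b = dH h2 b)"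

lemma resf_swap: "resf dG dH a b g1 h1 g2 h2 = resf dH dG b a h1 g1 h2 g2"
  unfolding resf_def by auto

lemma prod_resolves:
  assumes cG: "connected_graph V E" and cH: "connected_graph W F"
    and mem: "g1 \<in> V" "g2 \<in> V" "a \<in> V" "h1 \<in> W" "h2 \<in> W" "b \<in> W"
  shows "strongly_resolves (V \<times> W) (cart_adj E F) (a, b) (g1, h1) (g2, h2) \<longleftrightarrow>
         resf (gdist V E) (gdist W F) a b g1 h1 g2 h2"
proof -
  have cP: "connected_graph (V \<times> W) (cart_adj E F)" using cart_conn[OF cG cH] .
  note D = prod_dist[OF cG cH]
  have t1: "gdist V E g1 a \<le> gdist V E g1 g2 + gdist V E g2 a" using gdist_tri[OF cG] mem by blast
  have t2: "gdist V E g2 a \<le> gdist V E g2 g1 + gdist V E g1 a" using gdist_tri[OF cG] mem by blast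
  have t3: "gdist W F h1 b \<le> gdist W F h1 h2 + gdist W F h2 b" using gdist_tri[OF cH] mem by blast
  have t4: "gdist W F h2 b \<le> gdist W F h2 h1 + gdist W F h1 b" using gdist_tri[OF cH] mem by blast
  show ?thesis
    unfolding strongly_resolves_def resf_def
    using mem t1 t2 t3 t4
    by (simp add: interval_iff[OF cP] D) arith
qed
lemma graph_edge: "graph V E \<Longrightarrow> E u v \<Longrightarrow> u \<in> V \<and> v \<in> V \<and> u \<noteq> v \<and> E v u"
  unfolding graph_def by blast

lemma dist_step:
  assumes c: "connected_graph V E" and a: "a \<in> V" and x: "x \<in> V" and d: "gdist V E x a = Suc m"
  shows "\<exists>y\<in>V. E x y \<and> gdist V E y a = m"
proof -
  obtain ws where ws: "walk V E ws" "hd ws = x" "last ws = a" "length ws = Suc (Suc m)"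
    using gdist_walk[OF c x a] d by auto
  then obtain y r where r: "ws = x # y # r" by (cases ws; cases "tl ws"; auto)
  have h: "E x y" "walk V E (y # r)" using ws(1) r by (auto simp: walk_Cons2)
  have yV: "y \<in> V" using walk_in[OF h(2)] by simp
  have "gdist V E y a \<le> m" using gdist_le[OF h(2), of y a] ws r by simp
  moreover have "gdist V E x a \<le> gdist V E x y + gdist V E y a" using gdist_tri[OF c x yV a] .
  moreover have "gdist V E x y \<le> 1" using gdist_edge[of E x y V, OF h(1) x yV] .
  ultimately show ?thesis using yV h d by (intro bexI[of _ y]) auto
qed

lemma dist_down:
  assumes c: "connected_graph V E" and a: "a \<in> V"
  shows "x \<in> V \<Longrightarrow> gdist V E x a = n \<Longrightarrow> i \<le> n \<Longrightarrow> \<exists>y\<in>V. gdist V E y a = i"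
proof (induction n arbitrary: x)
  case 0 then show ?case by auto
next
  case (Suc n)
  show ?case
  proof (cases "i = Suc n")
    case True then show ?thesis using Suc.prems by auto
  next
    case False
    obtain y where "y \<in> V" "gdist V E y a = n" using dist_step[OF c a Suc.prems(1,2)] by blast
    then show ?thesis using Suc.IH False Suc.prems(3) by auto
  qed
qed

lemma inj_path:
  assumes g: "graph V E" and c: "connected_graph V E" and a: "a \<in> V"
    and inj: "inj_on (\<lambda>x. gdist V E x a) V"
  shows "is_path_graph V E"
proof -
  define d where "d x = gdist V E x a" for x
  have fin: "finite V" using g by (simp add: graph_def)
  define K where "K = Max (d ` V)"
  have dK: "d x \<le> K" if "x \<in> V" for x unfolding K_def using fin that by auto
  have exK: "\<exists>x\<in>V. d x = K" unfolding K_def using fin a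
    by (metis (mono_tags, lifting) Max_in empty_iff finite_imageI image_iff)
  have ex: "\<exists>y\<in>V. d y = i" if "i \<le> K" for i
    using exK dist_down[OF c a] that unfolding d_def by blast
  have uniq: "x = y" if "x \<in> V" "y \<in> V" "d x = d y" for x y
    using inj that unfolding d_def inj_on_def by blast
  define t where "t i = (THE y. y \<in> V \<and> d y = i)" for i
  have t: "t i \<in> V \<and> d (t i) = i" if iK: "i \<le> K" for i
  proof -
    obtain y where "y \<in> V" "d y = i" using ex[OF iK] by blast
    then have "\<exists>!y. y \<in> V \<and> d y = i" using uniq by blast
    then show ?thesis unfolding t_def by (rule theI')
  qed
  have td: "t (d y) = y" if "y \<in> V" for y
    unfolding t_def using that uniq by (intro the_equality) auto
  define xs where "xs = map t [0..<Suc K]"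
  have len: "length xs = Suc K" by (simp add: xs_def)
  have nth: "xs ! i = t i" if "i < Suc K" for i using that unfolding xs_def by (simp del: upt_Suc)
  have "distinct xs" unfolding xs_def
  proof (rule distinct_map[THEN iffD2], intro conjI)
    show "inj_on t (set [0..<Suc K])"
      by (rule inj_onI) (metis atLeastLessThan_iff less_Suc_eq_le set_upt t)
  qed simp
  moreover have "set xs = V"
  proof
    show "set xs \<subseteq> V" unfolding xs_def using t by auto
    show "V \<subseteq> set xs"
    proof
      fix y assume "y \<in> V"
      then have "y = t (d y)" "d y < Suc K" using td dK by (auto simp: less_Suc_eq_le)
      then show "y \<in> set xs" unfolding xs_def
        by (metis atLeastLessThan_iff image_eqI le0 list.set_map set_upt)
    qed
  qed
  moreover have "E u v \<longleftrightarrow> (\<exists>i. Suc i < length xs \<and> {u, v} = {xs ! i, xs ! Suc i})" for u v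
  proof
    assume e: "E u v"
    have uv: "u \<in> V" "v \<in> V" "u \<noteq> v" "E v u" using graph_edge[OF g e] by auto
    have "d u \<le> d v + 1" using gdist_tri[OF c uv(1) uv(2) a] gdist_edge[of E u v V, OF e uv(1,2)] unfolding d_def by simp
    moreover have "d v \<le> d u + 1" using gdist_tri[OF c uv(2) uv(1) a] gdist_edge[of E v u V, OF uv(4) uv(2,1)] unfolding d_def by simp
    moreover have "d u \<noteq> d v" using uniq uv by blast
    ultimately have "d v = Suc (d u) \<or> d u = Suc (d v)" by auto
    then show "\<exists>i. Suc i < length xs \<and> {u, v} = {xs ! i, xs ! Suc i}"
    proof
      assume h: "d v = Suc (d u)"
      have "d v \<le> K" using dK uv by simp
      moreover have "t (d u) = u" "t (d v) = v" using td uv by auto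
      ultimately show ?thesis using h len nth
        by (intro exI[of _ "d u"]) (auto simp: less_Suc_eq_le)
    next
      assume h: "d u = Suc (d v)"
      have "d u \<le> K" using dK uv by simp
      moreover have "t (d u) = u" "t (d v) = v" using td uv by auto
      ultimately show ?thesis using h len nth
        by (intro exI[of _ "d v"]) (auto simp: less_Suc_eq_le)
    qed
  next
    assume "\<exists>i. Suc i < length xs \<and> {u, v} = {xs ! i, xs ! Suc i}"
    then obtain i where i: "Suc i \<le> K" "{u, v} = {t i, t (Suc i)}" using len nth
      by (metis Suc_lessD less_Suc_eq_le)
    have ts: "t (Suc i) \<in> V" "d (t (Suc i)) = Suc i" using t[OF i(1)] by auto
    obtain y where y: "y \<in> V" "E (t (Suc i)) y" "d y = i"
      using dist_step[OF c a ts(1)] ts(2) unfolding d_def by blast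
    have "y = t i" using uniq y t[of i] i(1) by auto
    then have "E (t (Suc i)) (t i)" "E (t i) (t (Suc i))" using y graph_edge[OF g y(2)] by auto
    then show "E u v" using i(2) by (auto simp: doubleton_eq_iff)
  qed
  ultimately show ?thesis unfolding is_path_graph_def by blast
qed
lemma path_dist:
  assumes c: "connected_graph V E" and xs: "distinct xs" "set xs = V"
    "\<forall>u v. E u v \<longleftrightarrow> (\<exists>i. Suc i < length xs \<and> {u, v} = {xs ! i, xs ! Suc i})"
    and ij: "i < length xs" "j < length xs"
  shows "gdist V E (xs ! i) (xs ! j) = (if i \<le> j then j - i else i - j)"
proof -
  have inV: "xs ! k \<in> V" if "k < length xs" for k using that xs(2) by auto
  have e1: "E (xs ! k) (xs ! Suc k)" if "Suc k < length xs" for k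
    using xs(3)[rule_format, THEN iffD2] that by blast
  have e2: "E (xs ! Suc k) (xs ! k)" if "Suc k < length xs" for k using xs(3) that
    by (metis insert_commute)
  have up: "i + k < length xs \<Longrightarrow> gdist V E (xs ! i) (xs ! (i + k)) \<le> k \<and> gdist V E (xs ! (i + k)) (xs ! i) \<le> k" for i k
  proof (induction k)
    case 0 then show ?case using gdist_refl[OF inV, of i E] by simp
  next
    case (Suc k)
    have l: "i + k < length xs" "Suc (i + k) < length xs" using Suc.prems by auto
    have "gdist V E (xs ! i) (xs ! Suc (i + k)) \<le> gdist V E (xs ! i) (xs ! (i + k)) + gdist V E (xs ! (i + k)) (xs ! Suc (i + k))"
      using gdist_tri[OF c] inV l by auto
    moreover have "gdist V E (xs ! (i + k)) (xs ! Suc (i + k)) \<le> 1"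
      using gdist_edge[of E "xs ! (i + k)" "xs ! Suc (i + k)" V] e1 inV l by auto
    moreover have "gdist V E (xs ! Suc (i + k)) (xs ! i) \<le> gdist V E (xs ! Suc (i + k)) (xs ! (i + k)) + gdist V E (xs ! (i + k)) (xs ! i)"
      using gdist_tri[OF c] inV l by auto
    moreover have "gdist V E (xs ! Suc (i + k)) (xs ! (i + k)) \<le> 1"
      using gdist_edge[of E "xs ! Suc (i + k)" "xs ! (i + k)" V] e2 inV l by auto
    ultimately show ?case using Suc.IH l by simp
  qed
  define pos where "pos x = (THE k. k < length xs \<and> xs ! k = x)" for x
  have pos: "pos (xs ! k) = k" if "k < length xs" for k
    unfolding pos_def
  proof (rule the_equality)
    show "k < length xs \<and> xs ! k = xs ! k" using that by simp
    fix m assume "m < length xs \<and> xs ! m = xs ! k"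
    then show "m = k" using nth_eq_iff_index_eq[OF xs(1) _ that, of m] by simp
  qed
  have lip: "pos x \<le> pos y + 1 \<and> length xs - pos x \<le> (length xs - pos y) + 1" if exy: "E x y" for x y
  proof -
    obtain k where k: "Suc k < length xs" "{x, y} = {xs ! k, xs ! Suc k}"
      using xs(3)[rule_format, THEN iffD1, OF exy] by blast
    then have "(x = xs ! k \<and> y = xs ! Suc k) \<or> (x = xs ! Suc k \<and> y = xs ! k)" by (auto simp: doubleton_eq_iff)
    moreover have "pos (xs ! k) = k" "pos (xs ! Suc k) = Suc k" using pos k(1) by auto
    ultimately show ?thesis by auto
  qed
  obtain ws where ws: "walk V E ws" "hd ws = xs ! i" "last ws = xs ! j" "length ws = Suc (gdist V E (xs ! i) (xs ! j))"
    using gdist_walk[OF c inV[OF ij(1)] inV[OF ij(2)]] by blast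
  have "pos (hd ws) \<le> pos (last ws) + (length ws - 1)"
    by (rule walk_lip[OF ws(1)]) (use lip in blast)
  moreover have "length xs - pos (hd ws) \<le> (length xs - pos (last ws)) + (length ws - 1)"
    by (rule walk_lip[OF ws(1), where f = "\<lambda>x. length xs - pos x"]) (use lip in blast)
  ultimately have lo: "i \<le> j + gdist V E (xs ! i) (xs ! j)" "length xs - i \<le> length xs - j + gdist V E (xs ! i) (xs ! j)"
    using ws pos ij by auto
  show ?thesis
  proof (cases "i \<le> j")
    case True
    then have "gdist V E (xs ! i) (xs ! j) \<le> j - i" using up[of i "j - i"] ij by auto
    then show ?thesis using lo True ij by auto
  next
    case False
    then have "gdist V E (xs ! i) (xs ! j) \<le> i - j" using up[of j "i - j"] ij by auto
    then show ?thesis using lo False ij by auto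
  qed
qed

lemma key_inj:
  fixes dG :: "'a \<Rightarrow> 'a \<Rightarrow> nat" and dH :: "'b \<Rightarrow> 'b \<Rightarrow> nat"
  assumes eG: "\<And>x y. x \<in> V \<Longrightarrow> y \<in> V \<Longrightarrow> dG x y = 0 \<Longrightarrow> x = y"
    and zH: "\<And>x. x \<in> W \<Longrightarrow> dH x x = 0"
    and eH: "\<And>x y. x \<in> W \<Longrightarrow> y \<in> W \<Longrightarrow> dH x y = 0 \<Longrightarrow> x = y"
    and dW: "d \<in> W" and h: "h \<in> W" "h \<noteq> d"
    and res: "\<And>g1 g2 h1 h2. g1 \<in> V \<Longrightarrow> g2 \<in> V \<Longrightarrow> h1 \<in> W \<Longrightarrow> h2 \<in> W \<Longrightarrow>
               resf dG dH a b g1 h1 g2 h2 \<or> resf dG dH c d g1 h1 g2 h2"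
  shows "inj_on (\<lambda>x. dG x a) V"
proof (rule inj_onI)
  fix g1 g2 assume g: "g1 \<in> V" "g2 \<in> V" "dG g1 a = dG g2 a"
  show "g1 = g2"
  proof (rule ccontr)
    assume ne: "g1 \<noteq> g2"
    have n12: "dG g1 g2 \<noteq> 0" "dG g2 g1 \<noteq> 0" using eG g ne by auto
    have hd: "dH d h \<noteq> 0" "dH h d \<noteq> 0" using eH h dW by auto
    have zd: "dH d d = 0" using zH dW by auto
    have na: "\<not> resf dG dH a b g1 h1 g2 h2" for h1 h2 using n12 g(3) unfolding resf_def by auto
    have r1: "resf dG dH c d g1 d g2 h" using res[OF g(1,2) dW h(1)] na by blast
    have r2: "resf dG dH c d g1 h g2 d" using res[OF g(1,2) h(1) dW] na by blast
    have A: "dG g2 g1 + dG g1 c = dG g2 c" using r1 hd zd unfolding resf_def by auto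
    have B: "dG g1 g2 + dG g2 c = dG g1 c" using r2 hd zd unfolding resf_def by auto
    show False using A B n12 by simp
  qed
qed

lemma other: "2 \<le> card V \<Longrightarrow> \<exists>y\<in>V. y \<noteq> (x::'a)"
proof (rule ccontr)
  assume "2 \<le> card V" "\<not> (\<exists>y\<in>V. y \<noteq> x)"
  then have "V \<subseteq> {x}" by auto
  then have "card V \<le> 1" using card_mono[of "{x}" V] by simp
  then show False using \<open>2 \<le> card V\<close> by simp
qed

theorem proposition29:
  fixes V :: "'a set" and E :: "'a \<Rightarrow> 'a \<Rightarrow> bool"
    and W :: "'b set" and F :: "'b \<Rightarrow> 'b \<Rightarrow> bool"
  assumes "graph V E" and "graph W F"
    and "connected_graph V E" and "connected_graph W F"
    and "card V \<ge> 2" and "card W \<ge> 2"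
  shows "strong_metric_dim (V \<times> W) (cart_adj E F) = 2 \<longleftrightarrow>
         is_path_graph V E \<and> is_path_graph W F"
proof -
  note gG = assms(1) and gH = assms(2) and cG = assms(3) and cH = assms(4)
  have cP: "connected_graph (V \<times> W) (cart_adj E F)" using cart_conn[OF cG cH] .
  have finP: "finite (V \<times> W)" using gG gH by (simp add: graph_def)
  note PR = prod_resolves[OF cG cH]
  have zG: "\<And>x. x \<in> V \<Longrightarrow> gdist V E x x = 0" by (rule gdist_refl)
  have zH: "\<And>x. x \<in> W \<Longrightarrow> gdist W F x x = 0" by (rule gdist_refl)
  have eG: "\<And>x y. x \<in> V \<Longrightarrow> y \<in> V \<Longrightarrow> gdist V E x y = 0 \<Longrightarrow> x = y" using gdist_eq0[OF cG] by blast
  have eH: "\<And>x y. x \<in> W \<Longrightarrow> y \<in> W \<Longrightarrow> gdist W F x y = 0 \<Longrightarrow> x = y" using gdist_eq0[OF cH] by blast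
  have full: "strong_resolving_set (V \<times> W) (cart_adj E F) (V \<times> W)"
    unfolding strong_resolving_set_def strongly_resolves_def
  proof (intro conjI ballI)
    fix u v assume uv: "u \<in> V \<times> W" "v \<in> V \<times> W"
    have "v \<in> interval (V \<times> W) (cart_adj E F) u v"
      using uv by (simp add: interval_iff[OF cP] gdist_refl)
    then show "\<exists>w\<in>V \<times> W. v \<in> interval (V \<times> W) (cart_adj E F) u w \<or> u \<in> interval (V \<times> W) (cart_adj E F) v w"
      using uv by blast
  qed simp
  have lb: "2 \<le> card S" if SR: "strong_resolving_set (V \<times> W) (cart_adj E F) S" for S
  proof (rule ccontr)
    assume "\<not> 2 \<le> card S"
    then have c01: "card S = 0 \<or> card S = 1" by auto
    have finS: "finite S" using SR finP unfolding strong_resolving_set_def by (auto intro: finite_subset)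
    obtain g where g: "g \<in> V" using other[OF assms(5)] by blast
    obtain h where h: "h \<in> W" using other[OF assms(6)] by blast
    show False
    proof (cases "card S = 0")
      case True
      then have "S = {}" using finS by simp
      then show False using SR g h unfolding strong_resolving_set_def by blast
    next
      case False
      then have "card S = 1" using c01 by simp
      then obtain w where w: "S = {w}" by (rule card_1_singletonE)
      obtain a b where ab: "w = (a, b)" by fastforce
      have abin: "a \<in> V" "b \<in> W" using SR w ab unfolding strong_resolving_set_def by auto
      obtain a' where a': "a' \<in> V" "a' \<noteq> a" using other[OF assms(5)] by blast
      obtain b' where b': "b' \<in> W" "b' \<noteq> b" using other[OF assms(6)] by blast
      have "strongly_resolves (V \<times> W) (cart_adj E F) (a, b) (a', b) (a, b')"
        using SR w ab a' b' abin unfolding strong_resolving_set_def by blast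
      then have r: "resf (gdist V E) (gdist W F) a b a' b a b'" using PR a' b' abin by blast
      have "gdist W F b b' \<noteq> 0" "gdist V E a a' \<noteq> 0" using eH eG a' b' abin by blast+
      then show False using r zG zH abin unfolding resf_def by auto
    qed
  qed
  have dim_iff: "strong_metric_dim (V \<times> W) (cart_adj E F) = 2 \<longleftrightarrow>
      (\<exists>S. strong_resolving_set (V \<times> W) (cart_adj E F) S \<and> card S = 2)"
  proof
    assume "strong_metric_dim (V \<times> W) (cart_adj E F) = 2"
    moreover have "\<exists>S. strong_resolving_set (V \<times> W) (cart_adj E F) S \<and> card S = strong_metric_dim (V \<times> W) (cart_adj E F)"
      unfolding strong_metric_dim_def by (rule LeastI_ex) (use full in blast)
    ultimately show "\<exists>S. strong_resolving_set (V \<times> W) (cart_adj E F) S \<and> card S = 2" by simp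
  next
    assume "\<exists>S. strong_resolving_set (V \<times> W) (cart_adj E F) S \<and> card S = 2"
    then show "strong_metric_dim (V \<times> W) (cart_adj E F) = 2"
      unfolding strong_metric_dim_def using lb by (intro Least_equality) auto
  qed
  show ?thesis
  proof
    assume "strong_metric_dim (V \<times> W) (cart_adj E F) = 2"
    then obtain S where SR: "strong_resolving_set (V \<times> W) (cart_adj E F) S" "card S = 2"
      using dim_iff by blast
    then obtain s t where st: "S = {s, t}" "s \<noteq> t" by (meson card_2_iff)
    obtain a b where s: "s = (a, b)" by fastforce
    obtain c d where t: "t = (c, d)" by fastforce
    have abcd: "a \<in> V" "b \<in> W" "c \<in> V" "d \<in> W" using SR(1) st s t unfolding strong_resolving_set_def by auto
    have res: "resf (gdist V E) (gdist W F) a b g1 h1 g2 h2 \<or> resf (gdist V E) (gdist W F) c d g1 h1 g2 h2"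
      if g12: "g1 \<in> V" "g2 \<in> V" "h1 \<in> W" "h2 \<in> W" for g1 g2 h1 h2
    proof -
      obtain w where "w \<in> S" "strongly_resolves (V \<times> W) (cart_adj E F) w (g1, h1) (g2, h2)"
        using SR(1) g12 unfolding strong_resolving_set_def by blast
      then show ?thesis using st s t PR g12 abcd by auto
    qed
    obtain h where h: "h \<in> W" "h \<noteq> d" using other[OF assms(6)] by blast
    obtain g where g: "g \<in> V" "g \<noteq> c" using other[OF assms(5)] by blast
    have injG: "inj_on (\<lambda>x. gdist V E x a) V"
      by (rule key_inj[OF eG zH eH abcd(4) h res])
    have injH: "inj_on (\<lambda>x. gdist W F x b) W"
    proof (rule key_inj[OF eH zG eG abcd(3) g])
      fix h1 h2 g1 g2 assume "h1 \<in> W" "h2 \<in> W" "g1 \<in> V" "g2 \<in> V"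
      then show "resf (gdist W F) (gdist V E) b a h1 g1 h2 g2 \<or> resf (gdist W F) (gdist V E) d c h1 g1 h2 g2"
        using res[of g1 g2 h1 h2] resf_swap by metis
    qed
    show "is_path_graph V E \<and> is_path_graph W F"
      using inj_path[OF gG cG abcd(1) injG] inj_path[OF gH cH abcd(2) injH] by simp
  next
    assume "is_path_graph V E \<and> is_path_graph W F"
    then obtain xs ys where xs: "distinct xs" "set xs = V"
        "\<forall>u v. E u v \<longleftrightarrow> (\<exists>i. Suc i < length xs \<and> {u, v} = {xs ! i, xs ! Suc i})"
      and ys: "distinct ys" "set ys = W"
        "\<forall>u v. F u v \<longleftrightarrow> (\<exists>i. Suc i < length ys \<and> {u, v} = {ys ! i, ys ! Suc i})"
      unfolding is_path_graph_def by blast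
    define m where "m = length xs"
    define n where "n = length ys"
    have m2: "2 \<le> m" using assms(5) distinct_card[OF xs(1)] xs(2) unfolding m_def by simp
    have n2: "2 \<le> n" using assms(6) distinct_card[OF ys(1)] ys(2) unfolding n_def by simp
    note DG = path_dist[OF cG xs, folded m_def]
    note DH = path_dist[OF cH ys, folded n_def]
    define S where "S = {(xs ! 0, ys ! 0), (xs ! 0, ys ! (n - 1))}"
    have yne: "ys ! 0 \<noteq> ys ! (n - 1)" 
    proof
      assume "ys ! 0 = ys ! (n - 1)"
      moreover have "0 < length ys" "n - 1 < length ys" using n2 unfolding n_def by auto
      ultimately have "0 = n - 1" using nth_eq_iff_index_eq[OF ys(1)] by blast
      then show False using n2 by simp
    qed
    have cardS: "card S = 2" unfolding S_def using yne by simp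
    have Ssub: "S \<subseteq> V \<times> W" unfolding S_def using xs(2) ys(2) m2 n2 m_def n_def by (auto intro!: nth_mem)
    have "strong_resolving_set (V \<times> W) (cart_adj E F) S"
      unfolding strong_resolving_set_def
    proof (intro conjI ballI Ssub)
      fix u v assume uv: "u \<in> V \<times> W" "v \<in> V \<times> W"
      obtain i j where ij: "i < m" "j < n" "u = (xs ! i, ys ! j)"
        using uv xs(2) ys(2) unfolding m_def n_def by (auto simp: in_set_conv_nth)
      obtain k l where kl: "k < m" "l < n" "v = (xs ! k, ys ! l)"
        using uv xs(2) ys(2) unfolding m_def n_def by (auto simp: in_set_conv_nth)
      have z: "0 < m" "0 < n" "n - 1 < n" using m2 n2 by auto
      have inn: "xs ! i \<in> V" "xs ! k \<in> V" "xs ! 0 \<in> V" "ys ! j \<in> W" "ys ! l \<in> W" "ys ! 0 \<in> W" "ys ! (n - 1) \<in> W"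
        using xs(2) ys(2) ij kl z unfolding m_def n_def by auto
      have "resf (gdist V E) (gdist W F) (xs ! 0) (ys ! 0) (xs ! i) (ys ! j) (xs ! k) (ys ! l) \<or>
            resf (gdist V E) (gdist W F) (xs ! 0) (ys ! (n - 1)) (xs ! i) (ys ! j) (xs ! k) (ys ! l)"
        unfolding resf_def using ij kl z by (simp add: DG DH) arith
      then show "\<exists>w\<in>S. strongly_resolves (V \<times> W) (cart_adj E F) w u v"
        unfolding S_def using PR inn ij kl by auto
    qed
    then show "strong_metric_dim (V \<times> W) (cart_adj E F) = 2" using dim_iff cardS by blast
  qed
qed

end
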